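(* Let $\tau,\alpha,b>0$ satisfy $\alpha b>\tau$, let $B>0$ satisfy $\frac1b<B<\frac\alpha\tau$, and let $0<\gamma_\star<\gamma^\star$. Then there exist $\delta_1>0$ and $k_1,k_2>0$, depending only on $\Omega,\tau,\alpha,b,B,\gamma_\star,\gamma^\star$, such that whenever $\delta\in(0,\delta_1]$, $D>0$, the data are as in the context, $\varepsilon\in(0,1)$ and $T\in(0,T_{max,\varepsilon})$ are such that $\gamma_\star\le\gamma_\varepsilon(\Theta_\varepsilon)\le\gamma^\star$ in $\Omega\times(0,T)$, then for all $t\in(0,T)$, $$k_1\Big(\int_\Omega w_{\varepsilon x}^2+\int_\Omega v_{\varepsilon xx}^2+\int_\Omega u_{\varepsilon xx}^2+\varepsilon\int_\Omega u_{\varepsilon xxx}^2\Big)\le y_\varepsilon^{(B,\delta)}(t)\le k_2\Big(\int_\Omega w_{\varepsilon x}^2+\int_\Omega v_{\varepsilon xx}^2+\int_\Omega u_{\varepsilon xx}^2+\varepsilon\int_\Omega u_{\varepsilon xxx}^2\Big).$$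
   Context: Let $\Omega\subset\mathbb R$ be a bounded open interval and $D,\tau,\alpha,b>0$. Let $(\gamma_\varepsilon)_{\varepsilon\in(0,1)}\subset C^\infty([0,\infty);[0,\infty))$ and let $(u_{0\varepsilon}),(v_{0\varepsilon}),(w_{0\varepsilon}),(\Theta_{0\varepsilon})_{\varepsilon\in(0,1)}\subset C^\infty(\overline\Omega)$ be such that for each $\varepsilon$ the derivatives $u_{0\varepsilon x},v_{0\varepsilon x},w_{0\varepsilon x},\Theta_{0\varepsilon x}$ are compactly supported in $\Omega$, $\int_\Omega u_{0\varepsilon}=\int_\Omega v_{0\varepsilon}=\int_\Omega w_{0\varepsilon}=0$, and $\Theta_{0\varepsilon}\ge0$. For $\varepsilon\in(0,1)$ consider the regularized problem $$\tau w_{\varepsilon t}=\varepsilon w_{\varepsilon xx}+b(\gamma_\varepsilon(\Theta_\varepsilon)v_{\varepsilon x})_x+(\gamma_\varepsilon(\Theta_\varepsilon)u_{\varepsilon x})_x-\alpha w_\varepsilon,\quad v_{\varepsilon t}=\varepsilon v_{\varepsilon xx}+w_\varepsilon,\quad u_{\varepsilon t}=\varepsilon u_{\varepsilon xx}+v_\varepsilon,\quad \Theta_{\varepsilon t}=D\Theta_{\varepsilon xx}+b\gamma_\varepsilon(\Theta_\varepsilon)v_{\varepsilon x}^2$$ in $\Omega\times(0,\infty)$, with $w_{\varepsilon x}=v_{\varepsilon x}=u_{\varepsilon x}=\Theta_{\varepsilon x}=0$ on $\partial\Omega$ and initial values $w_{0\varepsilon},v_{0\varepsilon},u_{0\varepsilon},\Theta_{0\varepsilon}$.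 It is known that for each $\varepsilon$ there exist $T_{max,\varepsilon}\in(0,\infty]$ and a classical solution $(w_\varepsilon,v_\varepsilon,u_\varepsilon,\Theta_\varepsilon)$, each component in $C^{2,1}(\overline\Omega\times[0,T_{max,\varepsilon}))\cap C^\infty(\overline\Omega\times(0,T_{max,\varepsilon}))$, with $\Theta_\varepsilon\ge0$, $\int_\Omega w_\varepsilon=\int_\Omega v_\varepsilon=\int_\Omega u_\varepsilon=0$ for all times, and such that if $T_{max,\varepsilon}<\infty$ then $\limsup_{t\nearrow T_{max,\varepsilon}}\{\|w_\varepsilon\|_{L^\infty}+\|v_\varepsilon\|_{W^{1,2}}+\|u_\varepsilon\|_{W^{1,2}}+\|\Theta_\varepsilon\|_{L^\infty}\}=\infty$. Subscripts $x,t$ denote partial derivatives; $\int_\Omega$ integrates in $x$ at time $t$. For $B>0,\delta>0$ define, for $t\in[0,T_{max,\varepsilon})$ (with $\gamma_\varepsilon=\gamma_\varepsilon(\Theta_\varepsilon)$), $$y_\varepsilon^{(B,\delta)}(t):=\frac\tau2\int_\Omega w_{\varepsilon x}^2+\frac b2\int_\Omega\gamma_\varepsilon v_{\varepsilon xx}^2+\frac{B+b\delta}{2}\int_\Omega\gamma_\varepsilon u_{\varepsilon xx}^2+\frac{\alpha B-\tau\delta}{2}\int_\Omega v_{\varepsilon x}^2+\int_\Omega\gamma_\varepsilon u_{\varepsilon xx}v_{\varepsilon xx}+\varepsilon\int_\Omega\gamma_\varepsilon u_{\varepsilon xxx}^2$$ $$+\frac{(1+\tau)B\varepsilon}{2}\int_\Omega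 v_{\varepsilon xx}^2+\tau B\int_\Omega v_{\varepsilon x}w_{\varepsilon x}+\tau\delta\int_\Omega u_{\varepsilon x}w_{\varepsilon x}+\alpha\delta\int_\Omega u_{\varepsilon x}v_{\varepsilon x}.$$ *)

theory Defs
  imports "HOL-Analysis.Analysis" "HOL-Library.Extended_Real"
begin

text \<open>Omega is the bounded open interval {a<..<c} with a < c; its closure is {a..c}.\<close>

definition dwithin :: "real set \<Rightarrow> (real \<Rightarrow> real) \<Rightarrow> real \<Rightarrow> real" where
  "dwithin S g x = (THE d. (g has_real_derivative d) (at x within S))"

definition Cinf :: "real set \<Rightarrow> (real \<Rightarrow> real) \<Rightarrow> bool" where
  "Cinf S g \<longleftrightarrow> (\<exists>Dg :: nat \<Rightarrow> real \<Rightarrow> real. (\<forall>x\<in>S. Dg 0 x = g x) \<and>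
      (\<forall>k. \<forall>x\<in>S. (Dg k has_real_derivative Dg (Suc k) x) (at x within S)))"

definition px :: "real \<Rightarrow> real \<Rightarrow> (real \<Rightarrow> real \<Rightarrow> real) \<Rightarrow> real \<Rightarrow> real \<Rightarrow> real" where
  "px a c f x t = dwithin {a..c} (\<lambda>y. f y t) x"

definition pt :: "(real \<Rightarrow> real \<Rightarrow> real) \<Rightarrow> real \<Rightarrow> real \<Rightarrow> real" where
  "pt f x t = deriv (\<lambda>s. f x s) t"

definition init_ok :: "real \<Rightarrow> real \<Rightarrow> (real \<Rightarrow> real) \<Rightarrow> bool" where
  "init_ok a c f \<longleftrightarrow> Cinf {a..c} f \<and>
     (\<exists>a' c'. a < a' \<and> a' \<le> c' \<and> c' < c \<and> (\<forall>x\<in>{a..c} - {a'..c'}. dwithin {a..c} f x = 0))"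

text \<open>Regularity: C^{2,1} on closure(Omega) x [0,Tmax) and smooth on closure(Omega) x (0,Tmax).\<close>
definition sol_reg :: "real \<Rightarrow> real \<Rightarrow> ereal \<Rightarrow> (real \<Rightarrow> real \<Rightarrow> real) \<Rightarrow> bool" where
  "sol_reg a c Tm f \<longleftrightarrow>
     continuous_on ({a..c} \<times> {t. 0 \<le> t \<and> ereal t < Tm}) (\<lambda>(x,t). f x t) \<and>
     continuous_on ({a..c} \<times> {t. 0 \<le> t \<and> ereal t < Tm}) (\<lambda>(x,t). px a c f x t) \<and>
     continuous_on ({a..c} \<times> {t. 0 \<le> t \<and> ereal t < Tm}) (\<lambda>(x,t). px a c (px a c f) x t) \<and>
     (\<forall>x\<in>{a..c}. ((\<lambda>s. f x s) has_real_derivative dwithin {t. 0 \<le> t \<and> ereal t < Tm} (\<lambda>s. f x s) 0)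
         (at 0 within {t. 0 \<le> t \<and> ereal t < Tm})) \<and>
     continuous_on ({a..c} \<times> {t. 0 \<le> t \<and> ereal t < Tm})
        (\<lambda>(x,t). dwithin {t. 0 \<le> t \<and> ereal t < Tm} (\<lambda>s. f x s) t) \<and>
     (\<forall>t. 0 < t \<and> ereal t < Tm \<longrightarrow> Cinf {a..c} (\<lambda>x. f x t)) \<and>
     (\<forall>x\<in>{a..c}. Cinf {t. 0 < t \<and> ereal t < Tm} (\<lambda>s. f x s))"

text \<open>Classical solution of the regularized problem on closure(Omega) x [0,Tmax), with the
  stated properties (nonnegativity, mass zero, extensibility criterion).\<close>
definition is_solution ::
  "real \<Rightarrow> real \<Rightarrow> real \<Rightarrow> real \<Rightarrow> real \<Rightarrow> real \<Rightarrow> real \<Rightarrow> (real \<Rightarrow> real) \<Rightarrow>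
   (real \<Rightarrow> real) \<Rightarrow> (real \<Rightarrow> real) \<Rightarrow> (real \<Rightarrow> real) \<Rightarrow> (real \<Rightarrow> real) \<Rightarrow> ereal \<Rightarrow>
   (real \<Rightarrow> real \<Rightarrow> real) \<Rightarrow> (real \<Rightarrow> real \<Rightarrow> real) \<Rightarrow> (real \<Rightarrow> real \<Rightarrow> real) \<Rightarrow>
   (real \<Rightarrow> real \<Rightarrow> real) \<Rightarrow> bool" where
  "is_solution a c D \<tau> \<alpha> b \<epsilon> \<gamma> w0 v0 u0 \<Theta>0 Tm w v u \<Theta> \<longleftrightarrow>
     0 < Tm \<and>
     sol_reg a c Tm w \<and> sol_reg a c Tm v \<and> sol_reg a c Tm u \<and> sol_reg a c Tm \<Theta> \<and>
     (\<forall>x\<in>{a<..<c}. \<forall>t. 0 < t \<and> ereal t < Tm \<longrightarrow>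
        \<tau> * pt w x t = \<epsilon> * px a c (px a c w) x t
            + b * px a c (\<lambda>y s. \<gamma> (\<Theta> y s) * px a c v y s) x t
            + px a c (\<lambda>y s. \<gamma> (\<Theta> y s) * px a c u y s) x t - \<alpha> * w x t \<and>
        pt v x t = \<epsilon> * px a c (px a c v) x t + w x t \<and>
        pt u x t = \<epsilon> * px a c (px a c u) x t + v x t \<and>
        pt \<Theta> x t = D * px a c (px a c \<Theta>) x t + b * \<gamma> (\<Theta> x t) * (px a c v x t)\<^sup>2) \<and>
     (\<forall>t. 0 < t \<and> ereal t < Tm \<longrightarrow>
        (\<forall>x\<in>{a,c}. px a c w x t = 0 \<and> px a c v x t = 0 \<and> px a c u x t = 0 \<and> px a c \<Theta> x t = 0)) \<and>
     (\<forall>x\<in>{a..c}. w x 0 = w0 x \<and> v x 0 = v0 x \<and> u x 0 = u0 x \<and> \<Theta> x 0 = \<Theta>0 x) \<and>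
     (\<forall>x\<in>{a..c}. \<forall>t. 0 \<le> t \<and> ereal t < Tm \<longrightarrow> \<Theta> x t \<ge> 0) \<and>
     (\<forall>t. 0 \<le> t \<and> ereal t < Tm \<longrightarrow>
        integral {a..c} (\<lambda>x. w x t) = 0 \<and> integral {a..c} (\<lambda>x. v x t) = 0 \<and>
        integral {a..c} (\<lambda>x. u x t) = 0) \<and>
     (Tm < \<infinity> \<longrightarrow> (\<forall>M. \<forall>t0. 0 \<le> t0 \<and> ereal t0 < Tm \<longrightarrow> (\<exists>t. t0 < t \<and> ereal t < Tm \<and>
        M < (SUP x\<in>{a..c}. \<bar>w x t\<bar>)
            + sqrt (integral {a..c} (\<lambda>x. (v x t)\<^sup>2) + integral {a..c} (\<lambda>x. (px a c v x t)\<^sup>2))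
            + sqrt (integral {a..c} (\<lambda>x. (u x t)\<^sup>2) + integral {a..c} (\<lambda>x. (px a c u x t)\<^sup>2))
            + (SUP x\<in>{a..c}. \<bar>\<Theta> x t\<bar>))))"

definition yfun ::
  "real \<Rightarrow> real \<Rightarrow> real \<Rightarrow> real \<Rightarrow> real \<Rightarrow> real \<Rightarrow> real \<Rightarrow> real \<Rightarrow> (real \<Rightarrow> real) \<Rightarrow>
   (real \<Rightarrow> real \<Rightarrow> real) \<Rightarrow> (real \<Rightarrow> real \<Rightarrow> real) \<Rightarrow> (real \<Rightarrow> real \<Rightarrow> real) \<Rightarrow>
   (real \<Rightarrow> real \<Rightarrow> real) \<Rightarrow> real \<Rightarrow> real" where
  "yfun a c \<tau> \<alpha> b B \<delta> \<epsilon> \<gamma> w v u \<Theta> t =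
     \<tau>/2 * integral {a..c} (\<lambda>x. (px a c w x t)\<^sup>2)
   + b/2 * integral {a..c} (\<lambda>x. \<gamma> (\<Theta> x t) * (px a c (px a c v) x t)\<^sup>2)
   + (B + b*\<delta>)/2 * integral {a..c} (\<lambda>x. \<gamma> (\<Theta> x t) * (px a c (px a c u) x t)\<^sup>2)
   + (\<alpha>*B - \<tau>*\<delta>)/2 * integral {a..c} (\<lambda>x. (px a c v x t)\<^sup>2)
   + integral {a..c} (\<lambda>x. \<gamma> (\<Theta> x t) * px a c (px a c u) x t * px a c (px a c v) x t)
   + \<epsilon> * integral {a..c} (\<lambda>x. \<gamma> (\<Theta> x t) * (px a c (px a c (px a c u)) x t)\<^sup>2)
   + (1+\<tau>)*B*\<epsilon>/2 * integral {a..c} (\<lambda>x. (px a c (px a c v) x t)\<^sup>2)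
   + \<tau>*B * integral {a..c} (\<lambda>x. px a c v x t * px a c w x t)
   + \<tau>*\<delta> * integral {a..c} (\<lambda>x. px a c u x t * px a c w x t)
   + \<alpha>*\<delta> * integral {a..c} (\<lambda>x. px a c u x t * px a c v x t)"

end

theory Submission
  imports Defs
begin

lemma Icc_nonbot: fixes a c x :: real assumes "a < c" "x \<in> {a..c}" shows "at x within {a..c} \<noteq> bot"
proof -
  have "x \<in> closure ({a..c} - {x})"
  proof (cases "x = a")
    case True
    then have "{a<..c} \<subseteq> {a..c} - {x}" by auto
    moreover have "x \<in> closure {a<..c}" using True assms by simp
    ultimately show ?thesis using closure_mono by blast
  next
    case False
    then have "{a..<x} \<subseteq> {a..c} - {x}" using assms by auto
    moreover have "x \<in> closure {a..<x}" using False assms by simp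
    ultimately show ?thesis using closure_mono by blast
  qed
  then show ?thesis by (simp add: at_within_eq_bot_iff)
qed

lemma dwithin_eq: fixes a c x :: real
  assumes "a < c" "x \<in> {a..c}" "(g has_real_derivative d) (at x within {a..c})"
  shows "dwithin {a..c} g x = d"
  unfolding dwithin_def
proof (rule the_equality)
  show "(g has_real_derivative d) (at x within {a..c})" by (rule assms(3))
  fix d' assume "(g has_real_derivative d') (at x within {a..c})"
  then show "d' = d" using has_field_derivative_unique assms(3) Icc_nonbot[OF assms(1,2)] by blast
qed


lemma poinc:
  fixes a c :: real and f f' :: "real \<Rightarrow> real"
  assumes ac: "a < c" and cont: "continuous_on {a..c} f'"
    and der: "\<And>x. x \<in> {a..c} \<Longrightarrow> (f has_real_derivative f' x) (at x within {a..c})"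
    and fa: "f a = 0"
  shows "integral {a..c} (\<lambda>x. (f x)\<^sup>2) \<le> (c-a)\<^sup>2 * integral {a..c} (\<lambda>x. (f' x)\<^sup>2)"
proof -
  define Jc where "Jc = integral {a..c} (\<lambda>x. (f' x)\<^sup>2)"
  have contf: "continuous_on {a..c} f" using der by (rule DERIV_continuous_on)
  have Jc0: "0 \<le> Jc" unfolding Jc_def
    by (rule integral_nonneg) (auto intro: integrable_continuous_interval continuous_intros cont)
  have pt: "(f x)\<^sup>2 \<le> (c-a) * Jc" if x: "x \<in> {a..c}" for x
  proof (cases "x = a")
    case True then show ?thesis using fa Jc0 ac by simp
  next
    case False
    with x have ax: "a < x" "x \<le> c" by auto
    have sub: "{a..x} \<subseteq> {a..c}" using ax by auto
    have contx: "continuous_on {a..x} f'" using cont sub continuous_on_subset by blast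
    have derx: "(f has_vector_derivative f' y) (at y within {a..x})" if "y \<in> {a..x}" for y
      using der[of y] that sub DERIV_subset[of f "f' y" y "{a..c}" "{a..x}"]
      by (auto simp: has_real_derivative_iff_has_vector_derivative)
    have ftc: "(f' has_integral (f x - f a)) {a..x}"
      by (rule fundamental_theorem_of_calculus) (use ax derx in auto)
    define J where "J = integral {a..x} (\<lambda>y. (f' y)\<^sup>2)"
    have intJ: "((\<lambda>y. (f' y)\<^sup>2) has_integral J) {a..x}" unfolding J_def
      by (rule integrable_integral, rule integrable_continuous_interval) (auto intro: continuous_intros contx)
    define s where "s = f x / (x - a)"
    have hi: "((\<lambda>y. (f' y)\<^sup>2 - 2 * s * f' y + s\<^sup>2) has_integral (J - 2 * s * f x + s\<^sup>2 * (x-a))) {a..x}"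
    proof -
      have "((\<lambda>y. (f' y)\<^sup>2 - 2 * s * f' y) has_integral (J - 2 * s * f x)) {a..x}"
        using has_integral_diff[OF intJ has_integral_mult_right[OF ftc, of "2 * s"]] fa by simp
      moreover have "((\<lambda>y. s\<^sup>2) has_integral s\<^sup>2 * (x-a)) {a..x}"
        using has_integral_const_real[of "s\<^sup>2" a x] ax by (simp add: mult.commute)
      ultimately show ?thesis by (rule has_integral_add)
    qed
    have "0 \<le> J - 2 * s * f x + s\<^sup>2 * (x-a)"
    proof (rule has_integral_nonneg[OF hi])
      fix y show "0 \<le> (f' y)\<^sup>2 - 2 * s * f' y + s\<^sup>2"
        using zero_le_power2[of "f' y - s"] by (simp add: power2_diff algebra_simps)
    qed
    moreover have "2 * s * f x = 2 * ((f x)\<^sup>2 / (x-a))" "s\<^sup>2 * (x-a) = (f x)\<^sup>2 / (x-a)"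
    proof -
      have h: "x - a \<noteq> 0" using ax by simp
      show "2 * s * f x = 2 * ((f x)\<^sup>2 / (x-a))" unfolding s_def by (simp add: power2_eq_square)
      show "s\<^sup>2 * (x-a) = (f x)\<^sup>2 / (x-a)" unfolding s_def using h
        by (simp add: power_divide power2_eq_square)
    qed
    ultimately have "(f x)\<^sup>2 / (x-a) \<le> J" by linarith
    then have "(f x)\<^sup>2 \<le> (x-a) * J" using ax by (simp add: pos_divide_le_eq mult.commute)
    also have "J \<le> Jc" unfolding J_def Jc_def
      by (rule integral_subset_le[OF sub]) (auto intro!: integrable_continuous_interval continuous_intros contx cont)
    then have "(x-a) * J \<le> (c-a) * Jc"
      using ax Jc0 intJ by (intro mult_mono) (auto intro: has_integral_nonneg)
    finally show ?thesis .
  qed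
  have "integral {a..c} (\<lambda>x. (f x)\<^sup>2) \<le> integral {a..c} (\<lambda>x. (c-a) * Jc)"
    by (rule integral_le) (auto intro!: integrable_continuous_interval continuous_intros contf pt)
  also have "\<dots> = (c-a)\<^sup>2 * Jc" using ac by (simp add: power2_eq_square)
  finally show ?thesis unfolding Jc_def .
qed


lemma cinf_iter:
  fixes a c :: real
  assumes ac: "a < c" and ci: "Cinf {a..c} g"
  shows "\<exists>Dg. (\<forall>x\<in>{a..c}. Dg 0 x = g x) \<and>
     (\<forall>k. \<forall>x\<in>{a..c}. (Dg k has_real_derivative Dg (Suc k) x) (at x within {a..c})) \<and>
     (\<forall>k. \<forall>x\<in>{a..c}. (dwithin {a..c} ^^ k) g x = Dg k x)"
proof -
  obtain Dg where D0: "\<forall>x\<in>{a..c}. Dg 0 x = g x"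
    and DS: "\<forall>k. \<forall>x\<in>{a..c}. (Dg k has_real_derivative Dg (Suc k) x) (at x within {a..c})"
    using ci unfolding Cinf_def by blast
  have "\<forall>x\<in>{a..c}. (dwithin {a..c} ^^ k) g x = Dg k x" for k
  proof (induction k)
    case 0 then show ?case using D0 by simp
  next
    case (Suc k)
    show ?case
    proof
      fix x assume x: "x \<in> {a..c}"
      have "((dwithin {a..c} ^^ k) g has_real_derivative Dg (Suc k) x) (at x within {a..c})"
        by (rule has_field_derivative_transform_within[OF DS[rule_format, OF x] zero_less_one x])
           (use Suc in auto)
      then show "(dwithin {a..c} ^^ Suc k) g x = Dg (Suc k) x"
        using dwithin_eq[OF ac x] by simp
    qed
  qed
  then show ?thesis using D0 DS by blast
qed

lemma quad_pos:
  fixes p q r :: real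
  assumes "p > 0" "r > 0" "p * r > q\<^sup>2"
  shows "\<exists>k>0. \<forall>x y. k * (x\<^sup>2 + y\<^sup>2) \<le> p * x\<^sup>2 + 2 * q * x * y + r * y\<^sup>2"
proof -
  define k where "k = (p*r - q\<^sup>2) / (p + r)"
  have k0: "k > 0" unfolding k_def using assms by simp
  have kp: "k < p"
  proof -
    have "0 < p * p" using assms by simp
    then have "p*r - q\<^sup>2 < p * (p + r)" using assms by (simp add: algebra_simps add_pos_nonneg)
    then show ?thesis unfolding k_def using assms by (simp add: divide_less_eq)
  qed
  have det: "(p - k) * (r - k) \<ge> q\<^sup>2"
  proof -
    have "k * (p + r) = p*r - q\<^sup>2" unfolding k_def using assms by simp
    then have "(p - k) * (r - k) = q\<^sup>2 + k\<^sup>2" by (simp add: algebra_simps power2_eq_square)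
    then show ?thesis by simp
  qed
  have "k * (x\<^sup>2 + y\<^sup>2) \<le> p * x\<^sup>2 + 2 * q * x * y + r * y\<^sup>2" for x y
  proof -
    define p' where "p' = p - k"
    define r' where "r' = r - k"
    have p'0: "p' > 0" using kp unfolding p'_def by simp
    have "p' * (p' * x\<^sup>2 + 2 * q * x * y + r' * y\<^sup>2) = (p' * x + q * y)\<^sup>2 + (p' * r' - q\<^sup>2) * y\<^sup>2"
      by (simp add: algebra_simps power2_eq_square)
    also have "\<dots> \<ge> 0" using det unfolding p'_def r'_def by (intro add_nonneg_nonneg) auto
    finally have "p' * x\<^sup>2 + 2 * q * x * y + r' * y\<^sup>2 \<ge> 0"
      using p'0 by (simp add: zero_le_mult_iff)
    then show ?thesis unfolding p'_def r'_def by (simp add: algebra_simps)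
  qed
  then show ?thesis using k0 by blast
qed


lemma amgm2: fixes x y :: real shows "x * y \<le> (x\<^sup>2 + y\<^sup>2) / 2" "- ((x\<^sup>2 + y\<^sup>2) / 2) \<le> x * y"
proof -
  have "0 \<le> (x - y)\<^sup>2" by simp
  then have "0 \<le> x\<^sup>2 + y\<^sup>2 - 2 * (x * y)" by (simp add: power2_diff mult.assoc)
  then show "x * y \<le> (x\<^sup>2 + y\<^sup>2) / 2" by (simp add: field_simps)
  have "0 \<le> (x + y)\<^sup>2" by simp
  then have "0 \<le> x\<^sup>2 + y\<^sup>2 + 2 * (x * y)" by (simp add: power2_sum mult.assoc)
  then show "- ((x\<^sup>2 + y\<^sup>2) / 2) \<le> x * y" by (simp add: field_simps)
qed

lemma cmul_le: fixes k x y :: real shows "0 \<le> k \<Longrightarrow> x \<le> y \<Longrightarrow> k * x \<le> k * y"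
  by (rule mult_left_mono)

lemma lower_pt:
  fixes \<tau> \<alpha> b B \<delta> \<epsilon> g gl cA cB w v1 v2 u1 u2 u3 :: real
  assumes hA: "\<forall>x y. cA*(x\<^sup>2+y\<^sup>2) \<le> \<tau>/2*x\<^sup>2 + 2*(\<tau>*B/2)*x*y + \<alpha>*B/2*y\<^sup>2"
    and hB: "\<forall>x y. cB*(x\<^sup>2+y\<^sup>2) \<le> b/2*x\<^sup>2 + 2*(1/2)*x*y + B/2*y\<^sup>2"
    and "gl \<le> g" "0 < gl" "0 < cB" "0 \<le> \<delta>" "0 \<le> \<epsilon>" "0 < \<tau>" "0 < \<alpha>" "0 < b" "0 < B"
  shows "cA*w\<^sup>2 + cA* v1\<^sup>2 + gl*cB* v2\<^sup>2 + gl*cB*u2\<^sup>2 + \<epsilon>*gl*u3\<^sup>2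
           - \<delta>*((\<tau>+\<alpha>)/2)* v1\<^sup>2 - \<delta>*((\<tau>+\<alpha>)/2)*w\<^sup>2 - \<delta>*((\<tau>+\<alpha>)/2)*u1\<^sup>2
     \<le> \<tau>/2 * w\<^sup>2 + b/2 * (g * v2\<^sup>2) + (B + b*\<delta>)/2 * (g * u2\<^sup>2) + (\<alpha>*B - \<tau>*\<delta>)/2 * v1\<^sup>2
       + g * u2 * v2 + \<epsilon> * (g * u3\<^sup>2) + (1+\<tau>)*B*\<epsilon>/2 * v2\<^sup>2 + \<tau>*B * (v1 * w)
       + \<tau>*\<delta> * (u1 * w) + \<alpha>*\<delta> * (u1 * v1)"
proof -
  have g0: "0 \<le> g" using assms by linarith
  have A: "cA*(w\<^sup>2+v1\<^sup>2) \<le> \<tau>/2*w\<^sup>2 + \<tau>*B*(v1*w) + \<alpha>*B/2* v1\<^sup>2"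
    using hA[rule_format, of w v1] by (simp add: algebra_simps)
  have B0: "cB*(v2\<^sup>2+u2\<^sup>2) \<le> b/2* v2\<^sup>2 + u2* v2 + B/2*u2\<^sup>2"
    using hB[rule_format, of v2 u2] by (simp add: algebra_simps)
  have B1: "g*(cB*(v2\<^sup>2+u2\<^sup>2)) \<le> g*(b/2* v2\<^sup>2 + u2* v2 + B/2*u2\<^sup>2)"
    by (rule cmul_le[OF g0 B0])
  have B2: "gl*(cB*(v2\<^sup>2+u2\<^sup>2)) \<le> g*(cB*(v2\<^sup>2+u2\<^sup>2))"
    by (rule mult_right_mono) (use assms in auto)
  have E: "\<epsilon>*gl*u3\<^sup>2 \<le> \<epsilon> * (g * u3\<^sup>2)"
  proof -
    have "gl*u3\<^sup>2 \<le> g*u3\<^sup>2" by (rule mult_right_mono) (use assms in auto)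
    then have "\<epsilon>*(gl*u3\<^sup>2) \<le> \<epsilon>*(g*u3\<^sup>2)" by (rule cmul_le[rotated]) (use assms in auto)
    then show ?thesis by (simp add: mult.assoc)
  qed
  have e2: "0 \<le> (1+\<tau>)*B*\<epsilon>/2 * v2\<^sup>2" using assms by simp
  have d1: "0 \<le> b*\<delta>/2 * (g * u2\<^sup>2)" using assms g0 by simp
  have c1: "\<tau>*\<delta> * (- ((u1\<^sup>2 + w\<^sup>2) / 2)) \<le> \<tau>*\<delta> * (u1 * w)"
    by (rule cmul_le) (use assms amgm2 in auto)
  have c2: "\<alpha>*\<delta> * (- ((u1\<^sup>2 + v1\<^sup>2) / 2)) \<le> \<alpha>*\<delta> * (u1 * v1)"
    by (rule cmul_le) (use assms amgm2 in auto)
  have e3: "0 \<le> \<alpha>*\<delta>*w\<^sup>2" using assms by simp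
  let ?L = "cA*w\<^sup>2 + cA* v1\<^sup>2 + gl*cB* v2\<^sup>2 + gl*cB*u2\<^sup>2 + \<epsilon>*gl*u3\<^sup>2
           - \<delta>*((\<tau>+\<alpha>)/2)* v1\<^sup>2 - \<delta>*((\<tau>+\<alpha>)/2)*w\<^sup>2 - \<delta>*((\<tau>+\<alpha>)/2)*u1\<^sup>2"
  let ?R = "\<tau>/2 * w\<^sup>2 + b/2 * (g * v2\<^sup>2) + (B + b*\<delta>)/2 * (g * u2\<^sup>2) + (\<alpha>*B - \<tau>*\<delta>)/2 * v1\<^sup>2
       + g * u2 * v2 + \<epsilon> * (g * u3\<^sup>2) + (1+\<tau>)*B*\<epsilon>/2 * v2\<^sup>2 + \<tau>*B * (v1 * w)
       + \<tau>*\<delta> * (u1 * w) + \<alpha>*\<delta> * (u1 * v1)"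
  have "?R - ?L = ((\<tau>/2*w\<^sup>2 + \<tau>*B*(v1*w) + \<alpha>*B/2* v1\<^sup>2) - cA*(w\<^sup>2+v1\<^sup>2))
     + (g*(b/2* v2\<^sup>2 + u2* v2 + B/2*u2\<^sup>2) - g*(cB*(v2\<^sup>2+u2\<^sup>2)))
     + (g*(cB*(v2\<^sup>2+u2\<^sup>2)) - gl*(cB*(v2\<^sup>2+u2\<^sup>2)))
     + (\<epsilon> * (g * u3\<^sup>2) - \<epsilon>*gl*u3\<^sup>2) + (1+\<tau>)*B*\<epsilon>/2 * v2\<^sup>2 + b*\<delta>/2 * (g * u2\<^sup>2)
     + (\<tau>*\<delta> * (u1 * w) - \<tau>*\<delta> * (- ((u1\<^sup>2 + w\<^sup>2) / 2)))
     + (\<alpha>*\<delta> * (u1 * v1) - \<alpha>*\<delta> * (- ((u1\<^sup>2 + v1\<^sup>2) / 2)))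
     + \<alpha>*\<delta>*w\<^sup>2 / 2"
    by (simp add: field_simps)
  also have "\<dots> \<ge> 0" using A B1 B2 E e2 d1 c1 c2 e3 by linarith
  finally show ?thesis by linarith
qed

lemma upper_pt:
  fixes \<tau> \<alpha> b B \<delta> \<delta>1 \<epsilon> g gu w v1 v2 u1 u2 u3 M :: real
  assumes "0 \<le> g" "g \<le> gu" "0 \<le> \<delta>" "\<delta> \<le> \<delta>1" "0 \<le> \<epsilon>" "\<epsilon> \<le> 1" "0 < \<tau>" "0 < \<alpha>" "0 < b" "0 < B"
    and M: "M = \<tau> + \<tau>*B + \<tau>*\<delta>1 + b*gu + (B + b*\<delta>1)*gu + \<alpha>*B + gu + (1+\<tau>)*B + \<alpha>*\<delta>1"
  shows "\<tau>/2 * w\<^sup>2 + b/2 * (g * v2\<^sup>2) + (B + b*\<delta>)/2 * (g * u2\<^sup>2) + (\<alpha>*B - \<tau>*\<delta>)/2 * v1\<^sup>2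
       + g * u2 * v2 + \<epsilon> * (g * u3\<^sup>2) + (1+\<tau>)*B*\<epsilon>/2 * v2\<^sup>2 + \<tau>*B * (v1 * w)
       + \<tau>*\<delta> * (u1 * w) + \<alpha>*\<delta> * (u1 * v1)
     \<le> M*w\<^sup>2 + M* v2\<^sup>2 + M*u2\<^sup>2 + M*\<epsilon>*u3\<^sup>2 + M* v1\<^sup>2 + M*u1\<^sup>2"
proof -
  have gu0: "0 \<le> gu" using assms by linarith
  have t2: "b/2 * (g * v2\<^sup>2) \<le> b*gu/2 * v2\<^sup>2"
    using assms by (simp add: mult_right_mono mult_left_mono)
  have t3: "(B + b*\<delta>)/2 * (g * u2\<^sup>2) \<le> (B + b*\<delta>1)*gu/2 * u2\<^sup>2"
  proof -
    have "(B + b*\<delta>) * g \<le> (B + b*\<delta>1) * gu"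
      using assms by (intro mult_mono) (auto intro: add_nonneg_nonneg)
    then have "(B + b*\<delta>) * g * u2\<^sup>2 \<le> (B + b*\<delta>1) * gu * u2\<^sup>2" by (rule mult_right_mono) simp
    then show ?thesis by (simp add: mult.assoc)
  qed
  have t4: "(\<alpha>*B - \<tau>*\<delta>)/2 * v1\<^sup>2 \<le> \<alpha>*B/2 * v1\<^sup>2"
    using assms by (simp add: mult_right_mono)
  have t5: "g * u2 * v2 \<le> gu * ((u2\<^sup>2 + v2\<^sup>2)/2)"
  proof -
    have "g * (u2 * v2) \<le> g * ((u2\<^sup>2 + v2\<^sup>2)/2)" by (rule cmul_le) (use assms amgm2 in auto)
    also have "\<dots> \<le> gu * ((u2\<^sup>2 + v2\<^sup>2)/2)" by (rule mult_right_mono) (use assms in auto)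
    finally show ?thesis by (simp add: mult.assoc)
  qed
  have t6: "\<epsilon> * (g * u3\<^sup>2) \<le> gu * (\<epsilon> * u3\<^sup>2)"
    using assms by (simp add: mult_right_mono mult_left_mono mult.left_commute)
  have t7: "(1+\<tau>)*B*\<epsilon>/2 * v2\<^sup>2 \<le> (1+\<tau>)*B/2 * v2\<^sup>2"
    using assms by (simp add: mult_right_mono mult_left_mono)
  have t8: "\<tau>*B * (v1 * w) \<le> \<tau>*B * ((v1\<^sup>2 + w\<^sup>2)/2)" by (rule cmul_le) (use assms amgm2 in auto)
  have t9: "\<tau>*\<delta> * (u1 * w) \<le> \<tau>*\<delta>1 * ((u1\<^sup>2 + w\<^sup>2)/2)"
  proof -
    have "\<tau>*\<delta> * (u1 * w) \<le> \<tau>*\<delta> * ((u1\<^sup>2 + w\<^sup>2)/2)" by (rule cmul_le) (use assms amgm2 in auto)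
    also have "\<dots> \<le> \<tau>*\<delta>1 * ((u1\<^sup>2 + w\<^sup>2)/2)" by (rule mult_right_mono) (use assms in auto)
    finally show ?thesis .
  qed
  have t10: "\<alpha>*\<delta> * (u1 * v1) \<le> \<alpha>*\<delta>1 * ((u1\<^sup>2 + v1\<^sup>2)/2)"
  proof -
    have "\<alpha>*\<delta> * (u1 * v1) \<le> \<alpha>*\<delta> * ((u1\<^sup>2 + v1\<^sup>2)/2)" by (rule cmul_le) (use assms amgm2 in auto)
    also have "\<dots> \<le> \<alpha>*\<delta>1 * ((u1\<^sup>2 + v1\<^sup>2)/2)" by (rule mult_right_mono) (use assms in auto)
    finally show ?thesis .
  qed
  have nn: "0 \<le> w\<^sup>2" "0 \<le> v2\<^sup>2" "0 \<le> u2\<^sup>2" "0 \<le> \<epsilon>*u3\<^sup>2" "0 \<le> v1\<^sup>2" "0 \<le> u1\<^sup>2" using assms by auto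
  have d10: "0 \<le> \<delta>1" using assms by linarith
  have pos: "0 \<le> \<tau>*B" "0 \<le> \<tau>*\<delta>1" "0 \<le> b*gu" "0 \<le> (B + b*\<delta>1)*gu" "0 \<le> \<alpha>*B" "0 \<le> (1+\<tau>)*B" "0 \<le> \<alpha>*\<delta>1"
    using assms d10 gu0 by auto
  let ?R = "(\<tau>/2 + \<tau>*B/2 + \<tau>*\<delta>1/2)*w\<^sup>2 + (b*gu/2 + gu/2 + (1+\<tau>)*B/2)* v2\<^sup>2
     + ((B + b*\<delta>1)*gu/2 + gu/2)*u2\<^sup>2 + gu*(\<epsilon>*u3\<^sup>2) + (\<alpha>*B/2 + \<tau>*B/2 + \<alpha>*\<delta>1/2)* v1\<^sup>2
     + (\<tau>*\<delta>1/2 + \<alpha>*\<delta>1/2)*u1\<^sup>2"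
  have "?R \<le> M*w\<^sup>2 + M* v2\<^sup>2 + M*u2\<^sup>2 + M*\<epsilon>*u3\<^sup>2 + M* v1\<^sup>2 + M*u1\<^sup>2"
  proof -
    have m1: "\<tau>/2 + \<tau>*B/2 + \<tau>*\<delta>1/2 \<le> M" "b*gu/2 + gu/2 + (1+\<tau>)*B/2 \<le> M"
      "(B + b*\<delta>1)*gu/2 + gu/2 \<le> M" "gu \<le> M" "\<alpha>*B/2 + \<tau>*B/2 + \<alpha>*\<delta>1/2 \<le> M"
      "\<tau>*\<delta>1/2 + \<alpha>*\<delta>1/2 \<le> M"
      using pos assms gu0 unfolding M by linarith+
    show ?thesis
      using mult_right_mono[OF m1(1) nn(1)] mult_right_mono[OF m1(2) nn(2)] mult_right_mono[OF m1(3) nn(3)]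
        mult_right_mono[OF m1(4) nn(4)] mult_right_mono[OF m1(5) nn(5)] mult_right_mono[OF m1(6) nn(6)]
      by (simp add: mult.assoc)
  qed
  moreover have "\<tau>/2 * w\<^sup>2 + b/2 * (g * v2\<^sup>2) + (B + b*\<delta>)/2 * (g * u2\<^sup>2) + (\<alpha>*B - \<tau>*\<delta>)/2 * v1\<^sup>2
       + g * u2 * v2 + \<epsilon> * (g * u3\<^sup>2) + (1+\<tau>)*B*\<epsilon>/2 * v2\<^sup>2 + \<tau>*B * (v1 * w)
       + \<tau>*\<delta> * (u1 * w) + \<alpha>*\<delta> * (u1 * v1) \<le> ?R"
  proof -
    let ?F = "\<tau>/2 * w\<^sup>2 + b/2 * (g * v2\<^sup>2) + (B + b*\<delta>)/2 * (g * u2\<^sup>2) + (\<alpha>*B - \<tau>*\<delta>)/2 * v1\<^sup>2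
       + g * u2 * v2 + \<epsilon> * (g * u3\<^sup>2) + (1+\<tau>)*B*\<epsilon>/2 * v2\<^sup>2 + \<tau>*B * (v1 * w)
       + \<tau>*\<delta> * (u1 * w) + \<alpha>*\<delta> * (u1 * v1)"
    have "?R - ?F = (b*gu/2 * v2\<^sup>2 - b/2 * (g * v2\<^sup>2)) + ((B + b*\<delta>1)*gu/2 * u2\<^sup>2 - (B + b*\<delta>)/2 * (g * u2\<^sup>2))
      + (\<alpha>*B/2 * v1\<^sup>2 - (\<alpha>*B - \<tau>*\<delta>)/2 * v1\<^sup>2) + (gu * ((u2\<^sup>2 + v2\<^sup>2)/2) - g * u2 * v2)
      + (gu * (\<epsilon> * u3\<^sup>2) - \<epsilon> * (g * u3\<^sup>2)) + ((1+\<tau>)*B/2 * v2\<^sup>2 - (1+\<tau>)*B*\<epsilon>/2 * v2\<^sup>2)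
      + (\<tau>*B * ((v1\<^sup>2 + w\<^sup>2)/2) - \<tau>*B * (v1 * w)) + (\<tau>*\<delta>1 * ((u1\<^sup>2 + w\<^sup>2)/2) - \<tau>*\<delta> * (u1 * w))
      + (\<alpha>*\<delta>1 * ((u1\<^sup>2 + v1\<^sup>2)/2) - \<alpha>*\<delta> * (u1 * v1))"
      by (simp add: field_simps)
    also have "\<dots> \<ge> 0" using t2 t3 t4 t5 t6 t7 t8 t9 t10 by linarith
    finally show ?thesis by linarith
  qed
  ultimately show ?thesis by linarith
qed


lemma core:
  fixes a c \<tau> \<alpha> b B gl gu cA cB \<delta> \<delta>1 \<epsilon> k1 k2 M :: real
    and W1 V1 V2 U1 U2 U3 G :: "real \<Rightarrow> real"
  assumes ac: "a < c"
    and cW1: "continuous_on {a..c} W1" and cV1: "continuous_on {a..c} V1" and cV2: "continuous_on {a..c} V2"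
    and cU1: "continuous_on {a..c} U1" and cU2: "continuous_on {a..c} U2" and cU3: "continuous_on {a..c} U3"
    and cG: "continuous_on {a..c} G"
    and dV: "\<And>x. x \<in> {a..c} \<Longrightarrow> (V1 has_real_derivative V2 x) (at x within {a..c})"
    and dU: "\<And>x. x \<in> {a..c} \<Longrightarrow> (U1 has_real_derivative U2 x) (at x within {a..c})"
    and V1a: "V1 a = 0" and U1a: "U1 a = 0"
    and Gb: "\<forall>x\<in>{a<..<c}. gl \<le> G x \<and> G x \<le> gu"
    and hA: "\<forall>x y. cA*(x\<^sup>2+y\<^sup>2) \<le> \<tau>/2*x\<^sup>2 + 2*(\<tau>*B/2)*x*y + \<alpha>*B/2*y\<^sup>2"
    and hB: "\<forall>x y. cB*(x\<^sup>2+y\<^sup>2) \<le> b/2*x\<^sup>2 + 2*(1/2)*x*y + B/2*y\<^sup>2"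
    and pars: "0 < \<tau>" "0 < \<alpha>" "0 < b" "0 < B" "0 < gl" "0 < cA" "0 < cB"
    and dd: "0 < \<delta>" "\<delta> \<le> \<delta>1" and ee: "0 < \<epsilon>" "\<epsilon> < 1"
    and d1a: "\<delta>1 * ((\<tau>+\<alpha>)/2) \<le> cA/2" and d1b: "\<delta>1 * ((\<tau>+\<alpha>)/2) * (c-a)\<^sup>2 \<le> gl*cB/2"
    and k1: "0 < k1" "k1 \<le> cA/2" "k1 \<le> gl*cB/2" "k1 \<le> gl"
    and M: "M = \<tau> + \<tau>*B + \<tau>*\<delta>1 + b*gu + (B + b*\<delta>1)*gu + \<alpha>*B + gu + (1+\<tau>)*B + \<alpha>*\<delta>1"
    and k2: "k2 = M * (1 + (c-a)\<^sup>2)"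
  shows "k1 * (integral {a..c} (\<lambda>x. (W1 x)\<^sup>2) + integral {a..c} (\<lambda>x. (V2 x)\<^sup>2)
              + integral {a..c} (\<lambda>x. (U2 x)\<^sup>2) + \<epsilon> * integral {a..c} (\<lambda>x. (U3 x)\<^sup>2))
     \<le> \<tau>/2 * integral {a..c} (\<lambda>x. (W1 x)\<^sup>2)
   + b/2 * integral {a..c} (\<lambda>x. G x * (V2 x)\<^sup>2)
   + (B + b*\<delta>)/2 * integral {a..c} (\<lambda>x. G x * (U2 x)\<^sup>2)
   + (\<alpha>*B - \<tau>*\<delta>)/2 * integral {a..c} (\<lambda>x. (V1 x)\<^sup>2)
   + integral {a..c} (\<lambda>x. G x * U2 x * V2 x)
   + \<epsilon> * integral {a..c} (\<lambda>x. G x * (U3 x)\<^sup>2)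
   + (1+\<tau>)*B*\<epsilon>/2 * integral {a..c} (\<lambda>x. (V2 x)\<^sup>2)
   + \<tau>*B * integral {a..c} (\<lambda>x. V1 x * W1 x)
   + \<tau>*\<delta> * integral {a..c} (\<lambda>x. U1 x * W1 x)
   + \<alpha>*\<delta> * integral {a..c} (\<lambda>x. U1 x * V1 x)
   \<and> \<tau>/2 * integral {a..c} (\<lambda>x. (W1 x)\<^sup>2)
   + b/2 * integral {a..c} (\<lambda>x. G x * (V2 x)\<^sup>2)
   + (B + b*\<delta>)/2 * integral {a..c} (\<lambda>x. G x * (U2 x)\<^sup>2)
   + (\<alpha>*B - \<tau>*\<delta>)/2 * integral {a..c} (\<lambda>x. (V1 x)\<^sup>2)
   + integral {a..c} (\<lambda>x. G x * U2 x * V2 x)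
   + \<epsilon> * integral {a..c} (\<lambda>x. G x * (U3 x)\<^sup>2)
   + (1+\<tau>)*B*\<epsilon>/2 * integral {a..c} (\<lambda>x. (V2 x)\<^sup>2)
   + \<tau>*B * integral {a..c} (\<lambda>x. V1 x * W1 x)
   + \<tau>*\<delta> * integral {a..c} (\<lambda>x. U1 x * W1 x)
   + \<alpha>*\<delta> * integral {a..c} (\<lambda>x. U1 x * V1 x)
   \<le> k2 * (integral {a..c} (\<lambda>x. (W1 x)\<^sup>2) + integral {a..c} (\<lambda>x. (V2 x)\<^sup>2)
              + integral {a..c} (\<lambda>x. (U2 x)\<^sup>2) + \<epsilon> * integral {a..c} (\<lambda>x. (U3 x)\<^sup>2))"
  (is "?lo \<and> ?up")
proof -
  let ?S = "{a..c}"
  have hi: "(f has_integral integral ?S f) ?S" if "continuous_on ?S f" for f :: "real \<Rightarrow> real"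
    using integrable_continuous_interval[OF that] by (rule integrable_integral)
  have Gcl: "gl \<le> G x \<and> G x \<le> gu" if "x \<in> ?S" for x
  proof -
    have cl: "closure {a<..<c} = ?S" using ac by simp
    have "gl \<le> G x" by (rule continuous_ge_on_closure[of "{a<..<c}"]) (use cl cG that Gb in auto)
    moreover have "G x \<le> gu" by (rule continuous_le_on_closure[of "{a<..<c}"]) (use cl cG that Gb in auto)
    ultimately show ?thesis by simp
  qed
  define IW where "IW = integral ?S (\<lambda>x. (W1 x)\<^sup>2)"
  define IV1 where "IV1 = integral ?S (\<lambda>x. (V1 x)\<^sup>2)"
  define IV2 where "IV2 = integral ?S (\<lambda>x. (V2 x)\<^sup>2)"
  define IU1 where "IU1 = integral ?S (\<lambda>x. (U1 x)\<^sup>2)"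
  define IU2 where "IU2 = integral ?S (\<lambda>x. (U2 x)\<^sup>2)"
  define IU3 where "IU3 = integral ?S (\<lambda>x. (U3 x)\<^sup>2)"
  have nn: "0 \<le> IW" "0 \<le> IV1" "0 \<le> IV2" "0 \<le> IU1" "0 \<le> IU2" "0 \<le> IU3"
    unfolding IW_def IV1_def IV2_def IU1_def IU2_def IU3_def
    by (intro integral_nonneg integrable_continuous_interval continuous_intros
          cW1 cV1 cV2 cU1 cU2 cU3; simp)+
  have PV: "IV1 \<le> (c-a)\<^sup>2 * IV2" unfolding IV1_def IV2_def by (rule poinc[OF ac cV2 dV V1a])
  have PU: "IU1 \<le> (c-a)\<^sup>2 * IU2" unfolding IU1_def IU2_def by (rule poinc[OF ac cU2 dU U1a])
  let ?Y = "\<tau>/2 * integral {a..c} (\<lambda>x. (W1 x)\<^sup>2)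
   + b/2 * integral {a..c} (\<lambda>x. G x * (V2 x)\<^sup>2)
   + (B + b*\<delta>)/2 * integral {a..c} (\<lambda>x. G x * (U2 x)\<^sup>2)
   + (\<alpha>*B - \<tau>*\<delta>)/2 * integral {a..c} (\<lambda>x. (V1 x)\<^sup>2)
   + integral {a..c} (\<lambda>x. G x * U2 x * V2 x)
   + \<epsilon> * integral {a..c} (\<lambda>x. G x * (U3 x)\<^sup>2)
   + (1+\<tau>)*B*\<epsilon>/2 * integral {a..c} (\<lambda>x. (V2 x)\<^sup>2)
   + \<tau>*B * integral {a..c} (\<lambda>x. V1 x * W1 x)
   + \<tau>*\<delta> * integral {a..c} (\<lambda>x. U1 x * W1 x)
   + \<alpha>*\<delta> * integral {a..c} (\<lambda>x. U1 x * V1 x)"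
  have hF: "((\<lambda>x. \<tau>/2 * (W1 x)\<^sup>2 + b/2 * (G x * (V2 x)\<^sup>2) + (B + b*\<delta>)/2 * (G x * (U2 x)\<^sup>2)
       + (\<alpha>*B - \<tau>*\<delta>)/2 * (V1 x)\<^sup>2
       + G x * U2 x * V2 x + \<epsilon> * (G x * (U3 x)\<^sup>2) + (1+\<tau>)*B*\<epsilon>/2 * (V2 x)\<^sup>2 + \<tau>*B * (V1 x * W1 x)
       + \<tau>*\<delta> * (U1 x * W1 x) + \<alpha>*\<delta> * (U1 x * V1 x)) has_integral ?Y) ?S"
    apply (rule has_integral_add)+
    apply (rule has_integral_mult_right hi; (intro continuous_intros cW1 cV1 cV2 cU1 cU2 cU3 cG)?)+
    done
  let ?C = "(\<tau>+\<alpha>)/2"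
  let ?L = "cA*IW + cA*IV1 + gl*cB*IV2 + gl*cB*IU2 + \<epsilon>*gl*IU3 - \<delta>*?C*IV1 - \<delta>*?C*IW - \<delta>*?C*IU1"
  have hL: "((\<lambda>x. cA*(W1 x)\<^sup>2 + cA*(V1 x)\<^sup>2 + gl*cB*(V2 x)\<^sup>2 + gl*cB*(U2 x)\<^sup>2 + \<epsilon>*gl*(U3 x)\<^sup>2
           - \<delta>*?C*(V1 x)\<^sup>2 - \<delta>*?C*(W1 x)\<^sup>2 - \<delta>*?C*(U1 x)\<^sup>2) has_integral ?L) ?S"
    unfolding IW_def IV1_def IV2_def IU1_def IU2_def IU3_def
    by (intro has_integral_add has_integral_diff has_integral_mult_right hi continuous_intros
          cW1 cV1 cV2 cU1 cU2 cU3 cG)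
  have Llo: "?L \<le> ?Y"
    by (rule has_integral_le[OF hL hF], rule lower_pt[OF hA hB])
       (use Gcl pars dd ee in auto)
  let ?R = "M*IW + M*IV2 + M*IU2 + M*\<epsilon>*IU3 + M*IV1 + M*IU1"
  have hR: "((\<lambda>x. M*(W1 x)\<^sup>2 + M*(V2 x)\<^sup>2 + M*(U2 x)\<^sup>2 + M*\<epsilon>*(U3 x)\<^sup>2 + M*(V1 x)\<^sup>2 + M*(U1 x)\<^sup>2)
        has_integral ?R) ?S"
    unfolding IW_def IV1_def IV2_def IU1_def IU2_def IU3_def
    by (intro has_integral_add has_integral_mult_right hi continuous_intros
          cW1 cV1 cV2 cU1 cU2 cU3 cG)
  have Rup: "?Y \<le> ?R"
  proof (rule has_integral_le[OF hF hR])
    fix x assume x: "x \<in> ?S"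
    have g0: "0 \<le> G x" using Gcl[OF x] pars by linarith
    show "\<tau>/2 * (W1 x)\<^sup>2 + b/2 * (G x * (V2 x)\<^sup>2) + (B + b*\<delta>)/2 * (G x * (U2 x)\<^sup>2)
       + (\<alpha>*B - \<tau>*\<delta>)/2 * (V1 x)\<^sup>2
       + G x * U2 x * V2 x + \<epsilon> * (G x * (U3 x)\<^sup>2) + (1+\<tau>)*B*\<epsilon>/2 * (V2 x)\<^sup>2 + \<tau>*B * (V1 x * W1 x)
       + \<tau>*\<delta> * (U1 x * W1 x) + \<alpha>*\<delta> * (U1 x * V1 x)
       \<le> M*(W1 x)\<^sup>2 + M*(V2 x)\<^sup>2 + M*(U2 x)\<^sup>2 + M*\<epsilon>*(U3 x)\<^sup>2 + M*(V1 x)\<^sup>2 + M*(U1 x)\<^sup>2"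
      by (rule upper_pt[OF g0 _ _ _ _ _ pars(1-4) M]) (use Gcl[OF x] dd ee in auto)
  qed
  have gu0: "0 \<le> gu" using Gcl[of a] ac pars by auto
  have M0: "0 \<le> M" unfolding M using pars gu0 dd by (intro add_nonneg_nonneg) auto
  define P where "P = (c-a)\<^sup>2"
  have P0: "0 \<le> P" unfolding P_def by simp
  have C0: "0 \<le> ?C" using pars by simp
  have dC: "\<delta>*?C \<le> cA/2" using d1a mult_right_mono[OF dd(2) C0] by linarith
  have dCP: "\<delta>*?C*P \<le> gl*cB/2"
  proof -
    have "\<delta>*?C*P \<le> \<delta>1*?C*P" using dd C0 P0 by (intro mult_right_mono) auto
    then show ?thesis using d1b unfolding P_def by linarith
  qed
  have lo0: "k1*IW + k1*IV2 + k1*IU2 + k1*(\<epsilon>*IU3) \<le> ?L"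
  proof -
    have f1: "\<delta>*?C*IW \<le> (cA*IW)/2" using mult_right_mono[OF dC nn(1)] by simp
    have f2: "\<delta>*?C*IV1 \<le> (cA*IV1)/2" using mult_right_mono[OF dC nn(2)] by simp
    have f3: "\<delta>*?C*IU1 \<le> \<delta>*?C*P*IU2"
      using mult_left_mono[OF PU[folded P_def], of "\<delta>*?C"] pars dd by (simp add: mult.assoc)
    have f4: "\<delta>*?C*P*IU2 \<le> (gl*cB*IU2)/2" using mult_right_mono[OF dCP nn(5)] by simp
    have f5: "k1*IW \<le> (cA*IW)/2" using mult_right_mono[OF k1(2) nn(1)] by simp
    have f6: "k1*IV2 \<le> gl*cB*IV2" by (rule mult_right_mono) (use k1 pars nn in auto)
    have f7: "k1*IU2 \<le> (gl*cB*IU2)/2" using mult_right_mono[OF k1(3) nn(5)] by simp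
    have f8: "k1*(\<epsilon>*IU3) \<le> \<epsilon>*gl*IU3"
      using mult_right_mono[OF k1(4), of "\<epsilon>*IU3"] ee nn by (simp add: mult_ac)
    have f9: "0 \<le> cA*IV1" using pars nn by auto
    show ?thesis using f1 f2 f3 f4 f5 f6 f7 f8 f9 by linarith
  qed
  have lo: "k1*(IW+IV2+IU2+\<epsilon>*IU3) \<le> ?L" using lo0 by (simp add: distrib_left)
  have up: "?R \<le> k2*(IW+IV2+IU2+\<epsilon>*IU3)"
  proof -
    have g1: "M*IV1 \<le> M*(P*IV2)" using PV unfolding P_def by (rule mult_left_mono[OF _ M0])
    have g2: "M*IU1 \<le> M*(P*IU2)" using PU unfolding P_def by (rule mult_left_mono[OF _ M0])
    have g3: "0 \<le> M*(P*IW)" "0 \<le> M*(P*(\<epsilon>*IU3))" using M0 P0 nn ee by auto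
    show ?thesis unfolding k2 P_def[symmetric] using g1 g2 g3 by (simp add: algebra_simps)
  qed
  show ?thesis using lo up Llo Rup unfolding IW_def IV1_def IV2_def IU1_def IU2_def IU3_def by linarith
qed


lemma main_trans:
  fixes a c \<tau> \<alpha> b B gl gu cA cB \<delta> \<delta>1 \<epsilon> k1 k2 M D T t :: real
    and \<gamma> w0 v0 u0 \<Theta>0 :: "real \<Rightarrow> real" and Tm :: ereal and w v u \<Theta> :: "real \<Rightarrow> real \<Rightarrow> real"
  assumes ac: "a < c"
    and hA: "\<forall>x y. cA*(x\<^sup>2+y\<^sup>2) \<le> \<tau>/2*x\<^sup>2 + 2*(\<tau>*B/2)*x*y + \<alpha>*B/2*y\<^sup>2"
    and hB: "\<forall>x y. cB*(x\<^sup>2+y\<^sup>2) \<le> b/2*x\<^sup>2 + 2*(1/2)*x*y + B/2*y\<^sup>2"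
    and pars: "0 < \<tau>" "0 < \<alpha>" "0 < b" "0 < B" "0 < gl" "0 < cA" "0 < cB"
    and dd: "0 < \<delta>" "\<delta> \<le> \<delta>1" and ee: "0 < \<epsilon>" "\<epsilon> < 1"
    and d1a: "\<delta>1 * ((\<tau>+\<alpha>)/2) \<le> cA/2" and d1b: "\<delta>1 * ((\<tau>+\<alpha>)/2) * (c-a)\<^sup>2 \<le> gl*cB/2"
    and k1: "0 < k1" "k1 \<le> cA/2" "k1 \<le> gl*cB/2" "k1 \<le> gl"
    and M: "M = \<tau> + \<tau>*B + \<tau>*\<delta>1 + b*gu + (B + b*\<delta>1)*gu + \<alpha>*B + gu + (1+\<tau>)*B + \<alpha>*\<delta>1"
    and k2: "k2 = M * (1 + (c-a)\<^sup>2)"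
    and cg: "Cinf {0..} \<gamma>"
    and sol: "is_solution a c D \<tau> \<alpha> b \<epsilon> \<gamma> w0 v0 u0 \<Theta>0 Tm w v u \<Theta>"
    and TT: "ereal T < Tm"
    and Gb: "\<forall>x\<in>{a<..<c}. \<forall>t\<in>{0<..<T}. gl \<le> \<gamma> (\<Theta> x t) \<and> \<gamma> (\<Theta> x t) \<le> gu"
    and t: "t \<in> {0<..<T}"
  shows "k1 * (integral {a..c} (\<lambda>x. (px a c w x t)\<^sup>2)
              + integral {a..c} (\<lambda>x. (px a c (px a c v) x t)\<^sup>2)
              + integral {a..c} (\<lambda>x. (px a c (px a c u) x t)\<^sup>2)
              + \<epsilon> * integral {a..c} (\<lambda>x. (px a c (px a c (px a c u)) x t)\<^sup>2))
          \<le> yfun a c \<tau> \<alpha> b B \<delta> \<epsilon> \<gamma> w v u \<Theta> t \<and>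
        yfun a c \<tau> \<alpha> b B \<delta> \<epsilon> \<gamma> w v u \<Theta> t
          \<le> k2 * (integral {a..c} (\<lambda>x. (px a c w x t)\<^sup>2)
              + integral {a..c} (\<lambda>x. (px a c (px a c v) x t)\<^sup>2)
              + integral {a..c} (\<lambda>x. (px a c (px a c u) x t)\<^sup>2)
              + \<epsilon> * integral {a..c} (\<lambda>x. (px a c (px a c (px a c u)) x t)\<^sup>2))"
proof -
  let ?S = "{a..c}"
  have t0: "0 < t" "t < T" using t by auto
  have tT: "ereal t < Tm" 
  proof -
    have "ereal t < ereal T" using t0 by simp
    then show ?thesis using TT by (rule less_trans)
  qed
  have sr: "sol_reg a c Tm w" "sol_reg a c Tm v" "sol_reg a c Tm u" "sol_reg a c Tm \<Theta>"
    using sol unfolding is_solution_def by auto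
  have ci: "Cinf ?S (\<lambda>x. w x t)" "Cinf ?S (\<lambda>x. v x t)" "Cinf ?S (\<lambda>x. u x t)" "Cinf ?S (\<lambda>x. \<Theta> x t)"
    using sr t0 tT unfolding sol_reg_def by auto
  obtain Dw where Dw: "\<forall>k. \<forall>x\<in>?S. (Dw k has_real_derivative Dw (Suc k) x) (at x within ?S)"
     "\<forall>k. \<forall>x\<in>?S. (dwithin ?S ^^ k) (\<lambda>x. w x t) x = Dw k x"
    using cinf_iter[OF ac ci(1)] by blast
  obtain Dv where Dv: "\<forall>k. \<forall>x\<in>?S. (Dv k has_real_derivative Dv (Suc k) x) (at x within ?S)"
     "\<forall>k. \<forall>x\<in>?S. (dwithin ?S ^^ k) (\<lambda>x. v x t) x = Dv k x"
    using cinf_iter[OF ac ci(2)] by blast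
  obtain Du where Du: "\<forall>k. \<forall>x\<in>?S. (Du k has_real_derivative Du (Suc k) x) (at x within ?S)"
     "\<forall>k. \<forall>x\<in>?S. (dwithin ?S ^^ k) (\<lambda>x. u x t) x = Du k x"
    using cinf_iter[OF ac ci(3)] by blast
  obtain DT where DT0: "\<forall>x\<in>?S. DT 0 x = \<Theta> x t" and
     DT: "\<forall>k. \<forall>x\<in>?S. (DT k has_real_derivative DT (Suc k) x) (at x within ?S)"
    using cinf_iter[OF ac ci(4)] by blast
  have cont: "continuous_on ?S (Dw k)" "continuous_on ?S (Dv k)" "continuous_on ?S (Du k)"
     "continuous_on ?S (DT k)" for k
    using Dw(1) Dv(1) Du(1) DT by (meson DERIV_continuous_on)+
  have pw: "px a c w x t = Dw 1 x" if "x \<in> ?S" for x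
    using bspec[OF spec[OF Dw(2), of 1] that] by (simp add: px_def)
  have pv1: "px a c v x t = Dv 1 x" if "x \<in> ?S" for x
    using bspec[OF spec[OF Dv(2), of 1] that] by (simp add: px_def)
  have pv2: "px a c (px a c v) x t = Dv 2 x" if "x \<in> ?S" for x
    using bspec[OF spec[OF Dv(2), of 2] that] by (simp add: px_def numeral_2_eq_2)
  have pu1: "px a c u x t = Du 1 x" if "x \<in> ?S" for x
    using bspec[OF spec[OF Du(2), of 1] that] by (simp add: px_def)
  have pu2: "px a c (px a c u) x t = Du 2 x" if "x \<in> ?S" for x
    using bspec[OF spec[OF Du(2), of 2] that] by (simp add: px_def numeral_2_eq_2)
  have pu3: "px a c (px a c (px a c u)) x t = Du 3 x" if "x \<in> ?S" for x
    using bspec[OF spec[OF Du(2), of 3] that] by (simp add: px_def numeral_3_eq_3)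
  have bc: "px a c v a t = 0" "px a c u a t = 0"
    using sol t0 tT unfolding is_solution_def by auto
  have V1a: "Dv 1 a = 0" using bc(1) pv1[of a] ac by simp
  have U1a: "Du 1 a = 0" using bc(2) pu1[of a] ac by simp
  have Tnn: "\<forall>x\<in>?S. \<Theta> x t \<ge> 0" using sol t0 tT unfolding is_solution_def by auto
  obtain Dg where Dg0: "\<forall>x\<in>{0..}. Dg 0 x = \<gamma> x"
    and Dg: "\<forall>k. \<forall>x\<in>{0..}. (Dg k has_real_derivative Dg (Suc k) x) (at x within {0..})"
    using cg unfolding Cinf_def by blast
  have cgam: "continuous_on {0..} \<gamma>"
  proof -
    have "continuous_on {0..} (Dg 0)" using Dg by (meson DERIV_continuous_on)
    then show ?thesis using Dg0 continuous_on_cong by fastforce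
  qed
  have cTh: "continuous_on ?S (\<lambda>x. \<Theta> x t)"
    using cont(4)[of 0] DT0 continuous_on_cong by fastforce
  have cG: "continuous_on ?S (\<lambda>x. \<gamma> (\<Theta> x t))"
    by (rule continuous_on_compose2[OF cgam cTh]) (use Tnn in auto)
  have GB: "\<forall>x\<in>{a<..<c}. gl \<le> \<gamma> (\<Theta> x t) \<and> \<gamma> (\<Theta> x t) \<le> gu" using Gb t by auto
  have dV: "(Dv 1 has_real_derivative Dv 2 x) (at x within ?S)" if "x \<in> ?S" for x
    using bspec[OF spec[OF Dv(1), of 1] that] by (simp add: numeral_2_eq_2)
  have dU: "(Du 1 has_real_derivative Du 2 x) (at x within ?S)" if "x \<in> ?S" for x
    using bspec[OF spec[OF Du(1), of 1] that] by (simp add: numeral_2_eq_2)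
  note C = core[OF ac cont(1)[of 1] cont(2)[of 1] cont(2)[of 2] cont(3)[of 1] cont(3)[of 2] cont(3)[of 3]
      cG dV dU V1a U1a GB hA hB pars dd ee d1a d1b k1 M k2]
  have e0: "integral ?S (\<lambda>x. (px a c w x t)\<^sup>2) = integral ?S (\<lambda>x. (Dw 1 x)\<^sup>2)"
    by (rule integral_cong) (simp add: pw)
  have e1: "integral ?S (\<lambda>x. \<gamma> (\<Theta> x t) * (px a c (px a c v) x t)\<^sup>2) = integral ?S (\<lambda>x. \<gamma> (\<Theta> x t) * (Dv 2 x)\<^sup>2)"
    by (rule integral_cong) (simp add: pv2)
  have e2: "integral ?S (\<lambda>x. \<gamma> (\<Theta> x t) * (px a c (px a c u) x t)\<^sup>2) = integral ?S (\<lambda>x. \<gamma> (\<Theta> x t) * (Du 2 x)\<^sup>2)"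
    by (rule integral_cong) (simp add: pu2)
  have e3: "integral ?S (\<lambda>x. (px a c v x t)\<^sup>2) = integral ?S (\<lambda>x. (Dv 1 x)\<^sup>2)"
    by (rule integral_cong) (simp add: pv1)
  have e4: "integral ?S (\<lambda>x. \<gamma> (\<Theta> x t) * px a c (px a c u) x t * px a c (px a c v) x t) = integral ?S (\<lambda>x. \<gamma> (\<Theta> x t) * Du 2 x * Dv 2 x)"
    by (rule integral_cong) (simp add: pu2 pv2)
  have e5: "integral ?S (\<lambda>x. \<gamma> (\<Theta> x t) * (px a c (px a c (px a c u)) x t)\<^sup>2) = integral ?S (\<lambda>x. \<gamma> (\<Theta> x t) * (Du 3 x)\<^sup>2)"
    by (rule integral_cong) (simp add: pu3)
  have e6: "integral ?S (\<lambda>x. (px a c (px a c v) x t)\<^sup>2) = integral ?S (\<lambda>x. (Dv 2 x)\<^sup>2)"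
    by (rule integral_cong) (simp add: pv2)
  have e7: "integral ?S (\<lambda>x. px a c v x t * px a c w x t) = integral ?S (\<lambda>x. Dv 1 x * Dw 1 x)"
    by (rule integral_cong) (simp add: pv1 pw)
  have e8: "integral ?S (\<lambda>x. px a c u x t * px a c w x t) = integral ?S (\<lambda>x. Du 1 x * Dw 1 x)"
    by (rule integral_cong) (simp add: pu1 pw)
  have e9: "integral ?S (\<lambda>x. px a c u x t * px a c v x t) = integral ?S (\<lambda>x. Du 1 x * Dv 1 x)"
    by (rule integral_cong) (simp add: pu1 pv1)
  have e10: "integral ?S (\<lambda>x. (px a c (px a c u) x t)\<^sup>2) = integral ?S (\<lambda>x. (Du 2 x)\<^sup>2)"
    by (rule integral_cong) (simp add: pu2)
  have e11: "integral ?S (\<lambda>x. (px a c (px a c (px a c u)) x t)\<^sup>2) = integral ?S (\<lambda>x. (Du 3 x)\<^sup>2)"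
    by (rule integral_cong) (simp add: pu3)
  show ?thesis unfolding yfun_def e0 e1 e2 e3 e4 e5 e6 e7 e8 e9 e10 e11 by (rule C)
qed


theorem lemma4p2:
  fixes a c \<tau> \<alpha> b B gl gu :: real
  assumes "a < c" and "\<tau> > 0" and "\<alpha> > 0" and "b > 0" and "\<alpha> * b > \<tau>"
    and "1/b < B" and "B < \<alpha>/\<tau>" and "0 < gl" and "gl < gu"
  shows "\<exists>\<delta>1>0. \<exists>k1>0. \<exists>k2>0.
    \<forall>\<delta> D \<epsilon> \<gamma> w0 v0 u0 \<Theta>0 Tm T w v u \<Theta>.
      0 < \<delta> \<and> \<delta> \<le> \<delta>1 \<and> D > 0 \<and> 0 < \<epsilon> \<and> \<epsilon> < 1 \<and>
      Cinf {0..} \<gamma> \<and> (\<forall>s\<ge>0. \<gamma> s \<ge> 0) \<and>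
      init_ok a c w0 \<and> init_ok a c v0 \<and> init_ok a c u0 \<and> init_ok a c \<Theta>0 \<and>
      integral {a..c} w0 = 0 \<and> integral {a..c} v0 = 0 \<and> integral {a..c} u0 = 0 \<and>
      (\<forall>x\<in>{a..c}. \<Theta>0 x \<ge> 0) \<and>
      is_solution a c D \<tau> \<alpha> b \<epsilon> \<gamma> w0 v0 u0 \<Theta>0 Tm w v u \<Theta> \<and>
      0 < T \<and> ereal T < Tm \<and>
      (\<forall>x\<in>{a<..<c}. \<forall>t\<in>{0<..<T}. gl \<le> \<gamma> (\<Theta> x t) \<and> \<gamma> (\<Theta> x t) \<le> gu)
      \<longrightarrow> (\<forall>t\<in>{0<..<T}.
        k1 * (integral {a..c} (\<lambda>x. (px a c w x t)\<^sup>2)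
              + integral {a..c} (\<lambda>x. (px a c (px a c v) x t)\<^sup>2)
              + integral {a..c} (\<lambda>x. (px a c (px a c u) x t)\<^sup>2)
              + \<epsilon> * integral {a..c} (\<lambda>x. (px a c (px a c (px a c u)) x t)\<^sup>2))
          \<le> yfun a c \<tau> \<alpha> b B \<delta> \<epsilon> \<gamma> w v u \<Theta> t \<and>
        yfun a c \<tau> \<alpha> b B \<delta> \<epsilon> \<gamma> w v u \<Theta> t
          \<le> k2 * (integral {a..c} (\<lambda>x. (px a c w x t)\<^sup>2)
              + integral {a..c} (\<lambda>x. (px a c (px a c v) x t)\<^sup>2)
              + integral {a..c} (\<lambda>x. (px a c (px a c u) x t)\<^sup>2)
              + \<epsilon> * integral {a..c} (\<lambda>x. (px a c (px a c (px a c u)) x t)\<^sup>2)))"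
proof -
  have tB: "\<tau> * B < \<alpha>" using assms(2,7) by (simp add: less_divide_eq mult.commute)
  have bB: "1 < b * B" using assms(4,6) by (simp add: divide_less_eq mult.commute)
  have B0: "0 < B" using assms(4,6) by (meson less_trans zero_less_divide_1_iff)
  have pA: "(\<tau>*B/2)\<^sup>2 < \<tau>/2 * (\<alpha>*B/2)"
  proof -
    have "\<tau>*B*(\<tau>*B) < \<tau>*B*\<alpha>" using tB assms(2) B0
      by (intro mult_strict_left_mono) auto
    then show ?thesis by (simp add: power2_eq_square algebra_simps)
  qed
  obtain cA where cA: "cA > 0" and hA: "\<forall>x y. cA*(x\<^sup>2+y\<^sup>2) \<le> \<tau>/2*x\<^sup>2 + 2*(\<tau>*B/2)*x*y + \<alpha>*B/2*y\<^sup>2"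
    using quad_pos[of "\<tau>/2" "\<alpha>*B/2" "\<tau>*B/2"] pA assms(2,3) B0 by auto
  have pB: "(1/2::real)\<^sup>2 < b/2 * (B/2)" using bB by (simp add: power2_eq_square)
  obtain cB where cB: "cB > 0" and hB: "\<forall>x y. cB*(x\<^sup>2+y\<^sup>2) \<le> b/2*x\<^sup>2 + 2*(1/2)*x*y + B/2*y\<^sup>2"
    using quad_pos[of "b/2" "B/2" "1/2"] pB assms(4) B0 by auto
  define C where "C = (\<tau>+\<alpha>)/2"
  define P where "P = (c-a)\<^sup>2"
  have C0: "C > 0" unfolding C_def using assms by simp
  have P0: "P > 0" unfolding P_def using assms by simp
  define \<delta>1 where "\<delta>1 = min (cA/(2*C)) (gl*cB/(2*C*P))"
  have d1pos: "\<delta>1 > 0" unfolding \<delta>1_def using cA cB C0 P0 assms(8) by simp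
  have d1a: "\<delta>1 * ((\<tau>+\<alpha>)/2) \<le> cA/2"
  proof -
    have "\<delta>1 \<le> cA/(2*C)" unfolding \<delta>1_def by simp
    then have "\<delta>1 * (2*C) \<le> cA" using C0 by (simp add: le_divide_eq)
    then have "\<delta>1 * C * 2 \<le> cA" by (simp add: mult_ac)
    then show ?thesis unfolding C_def[symmetric] by linarith
  qed
  have d1b: "\<delta>1 * ((\<tau>+\<alpha>)/2) * (c-a)\<^sup>2 \<le> gl*cB/2"
  proof -
    have "\<delta>1 \<le> gl*cB/(2*C*P)" unfolding \<delta>1_def by simp
    then have "\<delta>1 * (2*C*P) \<le> gl*cB" using C0 P0 by (simp add: le_divide_eq)
    then have "\<delta>1 * C * P * 2 \<le> gl*cB" by (simp add: mult_ac)
    then show ?thesis unfolding C_def[symmetric] P_def[symmetric] by linarith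
  qed
  define k1 where "k1 = min (min (cA/2) (gl*cB/2)) gl"
  have k1: "0 < k1" "k1 \<le> cA/2" "k1 \<le> gl*cB/2" "k1 \<le> gl" unfolding k1_def using cA cB assms(8) by auto
  define M where "M = \<tau> + \<tau>*B + \<tau>*\<delta>1 + b*gu + (B + b*\<delta>1)*gu + \<alpha>*B + gu + (1+\<tau>)*B + \<alpha>*\<delta>1"
  define k2 where "k2 = M * (1 + (c-a)\<^sup>2)"
  have M0: "M > 0" unfolding M_def using assms B0 d1pos
    by (intro add_pos_nonneg) (auto intro!: add_nonneg_nonneg)
  have k2pos: "k2 > 0" unfolding k2_def using M0 by (simp add: add_pos_nonneg)
  show ?thesis
    apply (rule exI[of _ \<delta>1], rule conjI[OF d1pos])
    apply (rule exI[of _ k1], rule conjI[OF k1(1)])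
    apply (rule exI[of _ k2], rule conjI[OF k2pos])
    apply (intro allI impI ballI)
    apply (elim conjE)
    apply (rule main_trans[OF assms(1) hA hB assms(2,3,4) B0 assms(8) cA cB _ _ _ _ d1a d1b k1 M_def k2_def])
            apply assumption+
    done
qed

end
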